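(* Let $n_1,\dots,n_m$ be positive integers, $w=n_1+\dots+n_m$, and $x_1,\dots,x_m\in\mathbb C$ with $|x_i|<1$. Then $$\mathrm{Li}_{n_1,\dots,n_m}(x_1,\dots,x_m)=\int_{C_w}\Omega_{n_1,\dots,n_m}(x_1,\dots,x_m).$$
   Context: $\mathrm{Li}_{n_1,\dots,n_m}(x_1,\dots,x_m)=\sum_{0<k_1<\dots<k_m}\frac{x_1^{k_1}\cdots x_m^{k_m}}{k_1^{n_1}\cdots k_m^{n_m}}$. Put $N_k=n_1+\dots+n_k$ ($N_0=0$). Let $u_1,\dots,u_w$ be coordinates on $\mathbb A^w$ and $C_w=[0,1]^w$ the standard cube in the $u$-coordinates with its standard orientation. Define $v_j=x_ku_j$ if $j=N_k$ for some $k\ge1$, and $v_j=u_j$ otherwise. For $1\le j\le w$ put $P_j=v_jv_{j+1}\cdots v_w$. Then $\Omega_{n_1,\dots,n_m}(x_1,\dots,x_m)=\eta_1\wedge\eta_2\wedge\cdots\wedge\eta_w$, where $\eta_j=\frac{dP_j}{1-P_j}$ if $j=N_k+1$ for some $k\in\{0,\dots,m-1\}$ (the first index of a block) and $\eta_j=\frac{dP_j}{P_j}$ otherwise; the integral over $C_w$ is the integral of the pullback of this form under $u\mapsto v$. (E.g. for $m=1,n_1=2$: $\Omega_2(x)=\frac{d(v_1v_2)}{1-v_1v_2}\wedge\frac{dv_2}{v_2}$ with $v_1=u_1,v_2=xu_2$.) *)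

theory Defs
  imports "HOL-Analysis.Analysis"
begin

text \<open>Indices are 1-based as in the paper: n 1, ..., n m are the weights,
  x 1, ..., x m the arguments; cube coordinates are u 1, ..., u w.\<close>

text \<open>Multiple polylogarithm: sum over 0 < k 1 < ... < k m (tuples k extended by 0
  outside 1..m so that each tuple is represented exactly once).\<close>
definition Li :: "nat \<Rightarrow> (nat \<Rightarrow> nat) \<Rightarrow> (nat \<Rightarrow> complex) \<Rightarrow> complex" where
  "Li m n x = infsum (\<lambda>k. \<Prod>i=1..m. x i ^ k i / of_nat (k i) ^ n i)
     {k :: nat \<Rightarrow> nat. (\<forall>i. i \<notin> {1..m} \<longrightarrow> k i = 0) \<and> (\<forall>i\<in>{1..m}. 0 < k i)
        \<and> (\<forall>i\<in>{1..<m}. k i < k (Suc i))}"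

definition Nw :: "(nat \<Rightarrow> nat) \<Rightarrow> nat \<Rightarrow> nat" where
  "Nw n k = (\<Sum>i=1..k. n i)"

definition vcoord :: "nat \<Rightarrow> (nat \<Rightarrow> nat) \<Rightarrow> (nat \<Rightarrow> complex) \<Rightarrow> (nat \<Rightarrow> real) \<Rightarrow> nat \<Rightarrow> complex" where
  "vcoord m n x u j =
     (if \<exists>k\<in>{1..m}. j = Nw n k then x (THE k. k \<in> {1..m} \<and> j = Nw n k) * complex_of_real (u j)
      else complex_of_real (u j))"

definition Pprod :: "nat \<Rightarrow> (nat \<Rightarrow> nat) \<Rightarrow> (nat \<Rightarrow> complex) \<Rightarrow> (nat \<Rightarrow> real) \<Rightarrow> nat \<Rightarrow> complex" where
  "Pprod m n x u j = (\<Prod>l=j..Nw n m. vcoord m n x u l)"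

text \<open>Coefficient of du_i in the pullback of the 1-form eta_j:
  eta_j = dP_j/(1-P_j) if j = N_k + 1 for some k in {0..m-1}, and dP_j/P_j otherwise.\<close>
definition eta_coeff :: "nat \<Rightarrow> (nat \<Rightarrow> nat) \<Rightarrow> (nat \<Rightarrow> complex) \<Rightarrow> (nat \<Rightarrow> real) \<Rightarrow> nat \<Rightarrow> nat \<Rightarrow> complex" where
  "eta_coeff m n x u j i =
     (if \<exists>k\<in>{0..<m}. j = Nw n k + 1 then 1 / (1 - Pprod m n x u j) else 1 / Pprod m n x u j)
     * vector_derivative (\<lambda>t. Pprod m n x (u(i := t)) j) (at (u i))"

text \<open>Coefficient of du_1 \<and> ... \<and> du_w in the pullback of
  Omega = eta_1 \<and> ... \<and> eta_w (expansion of the wedge product of 1-forms).\<close>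
definition Omega_coeff :: "nat \<Rightarrow> (nat \<Rightarrow> nat) \<Rightarrow> (nat \<Rightarrow> complex) \<Rightarrow> (nat \<Rightarrow> real) \<Rightarrow> complex" where
  "Omega_coeff m n x u =
     (\<Sum>\<sigma> | \<sigma> permutes {1..Nw n m}.
        of_int (sign \<sigma>) * (\<Prod>j=1..Nw n m. eta_coeff m n x u j (\<sigma> j)))"

text \<open>The standard cube C_w = [0,1]^w with Lebesgue measure (standard orientation).\<close>
definition cube :: "nat \<Rightarrow> (nat \<Rightarrow> real) measure" where
  "cube w = PiM {1..w} (\<lambda>_. lebesgue_on {0..1})"

end

theory Submission
  imports Defs "HOL-Probability.Infinite_Product_Measure"
begin


definition acoef :: "nat \<Rightarrow> (nat \<Rightarrow> nat) \<Rightarrow> (nat \<Rightarrow> complex) \<Rightarrow> nat \<Rightarrow> complex" where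
  "acoef m n x l = (if \<exists>k\<in>{1..m}. l = Nw n k then x (THE k. k \<in> {1..m} \<and> l = Nw n k) else 1)"

lemma vcoord_eq: "vcoord m n x u l = acoef m n x l * complex_of_real (u l)"
  by (simp add: vcoord_def acoef_def)

lemma vd_lin: "((\<lambda>t::real. complex_of_real t * C) has_vector_derivative C) (at z)"
proof -
  have "((\<lambda>t::real. t *\<^sub>R C) has_vector_derivative C) (at z)"
    by (auto intro!: derivative_eq_intros)
  then show ?thesis by (simp add: scaleR_conv_of_real)
qed

lemma Pprod_upd:
  "Pprod m n x (u(i:=t)) j =
    (if i \<in> {j..Nw n m} then (acoef m n x i * complex_of_real t) * (\<Prod>l\<in>{j..Nw n m}-{i}. vcoord m n x u l)
     else Pprod m n x u j)"
proof (cases "i \<in> {j..Nw n m}")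
  case True
  have "Pprod m n x (u(i:=t)) j = vcoord m n x (u(i:=t)) i * (\<Prod>l\<in>{j..Nw n m}-{i}. vcoord m n x (u(i:=t)) l)"
    unfolding Pprod_def using True by (simp add: prod.remove)
  also have "(\<Prod>l\<in>{j..Nw n m}-{i}. vcoord m n x (u(i:=t)) l) = (\<Prod>l\<in>{j..Nw n m}-{i}. vcoord m n x u l)"
    by (rule prod.cong) (auto simp: vcoord_eq)
  also have "vcoord m n x (u(i:=t)) i = acoef m n x i * complex_of_real t" by (simp add: vcoord_eq)
  finally have eq: "Pprod m n x (u(i:=t)) j = acoef m n x i * complex_of_real t * (\<Prod>l\<in>{j..Nw n m}-{i}. vcoord m n x u l)" .
  show ?thesis by (simp only: if_P[OF True] eq)
next
  case False
  then show ?thesis unfolding Pprod_def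
    by (auto intro!: prod.cong simp: vcoord_eq)
qed

lemma deriv_Pprod:
  "vector_derivative (\<lambda>t. Pprod m n x (u(i := t)) j) (at (u i)) =
    (if i \<in> {j..Nw n m} then acoef m n x i * (\<Prod>l\<in>{j..Nw n m}-{i}. vcoord m n x u l) else 0)"
proof (cases "i \<in> {j..Nw n m}")
  case True
  have "((\<lambda>t. Pprod m n x (u(i := t)) j) has_vector_derivative
     acoef m n x i * (\<Prod>l\<in>{j..Nw n m}-{i}. vcoord m n x u l)) (at (u i))"
    using vd_lin[of "acoef m n x i * (\<Prod>l\<in>{j..Nw n m}-{i}. vcoord m n x u l)" "u i"] True
    by (simp add: Pprod_upd mult_ac)
  then show ?thesis using True by (simp add: vector_derivative_at)
next
  case False
  have e: "(\<lambda>t. Pprod m n x (u(i := t)) j) = (\<lambda>t. Pprod m n x u j)"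
    by (rule ext, subst Pprod_upd) (simp only: False if_False)
  have "((\<lambda>t. Pprod m n x (u(i := t)) j) has_vector_derivative 0) (at (u i))"
    unfolding e by simp
  then show ?thesis by (simp only: if_not_P[OF False]) (rule vector_derivative_at)
qed

definition cfac :: "nat \<Rightarrow> (nat \<Rightarrow> nat) \<Rightarrow> (nat \<Rightarrow> complex) \<Rightarrow> (nat \<Rightarrow> real) \<Rightarrow> nat \<Rightarrow> complex" where
  "cfac m n x u j = (if \<exists>k\<in>{0..<m}. j = Nw n k + 1 then 1 / (1 - Pprod m n x u j) else 1 / Pprod m n x u j)"

definition Omega_expl where
  "Omega_expl m n x u = (\<Prod>j=1..Nw n m. cfac m n x u j * (acoef m n x j * (\<Prod>l\<in>{Suc j..Nw n m}. vcoord m n x u l)))"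

lemma Omega_coeff_expl: "Omega_coeff m n x u = Omega_expl m n x u"
proof -
  let ?S = "{1..Nw n m}"
  let ?f = "\<lambda>\<sigma>. (of_int (sign \<sigma>) :: complex) * (\<Prod>j=1..Nw n m. eta_coeff m n x u j (\<sigma> j))"
  have ec: "eta_coeff m n x u j i = cfac m n x u j *
     (if i \<in> {j..Nw n m} then acoef m n x i * (\<Prod>l\<in>{j..Nw n m}-{i}. vcoord m n x u l) else 0)" for j i
    unfolding eta_coeff_def cfac_def deriv_Pprod by simp
  have z: "?f \<sigma> = 0" if "\<sigma> \<in> {\<sigma>. \<sigma> permutes ?S} - {id}" for \<sigma>
  proof -
    from that have p: "\<sigma> permutes ?S" and ne: "\<sigma> \<noteq> id" by auto
    have "\<not> (\<forall>i\<in>?S. \<sigma> i \<ge> i)" using permutes_natset_ge[OF p] ne by blast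
    then obtain j where j: "j \<in> ?S" "\<sigma> j < j" by auto
    have "eta_coeff m n x u j (\<sigma> j) = 0" using j by (simp add: ec)
    then have "(\<Prod>j=1..Nw n m. eta_coeff m n x u j (\<sigma> j)) = 0"
      using j by (intro prod_zero) auto
    then show ?thesis by simp
  qed
  have fin: "finite {\<sigma>. \<sigma> permutes ?S}" by (simp add: finite_permutations)
  have d: "eta_coeff m n x u j j = cfac m n x u j * (acoef m n x j * (\<Prod>l\<in>{Suc j..Nw n m}. vcoord m n x u l))"
    if "j \<in> {1..Nw n m}" for j
  proof -
    have "{j..Nw n m} - {j} = {Suc j..Nw n m}" by auto
    then show ?thesis using that by (simp add: ec)
  qed
  have "?f id = Omega_expl m n x u"
    unfolding Omega_expl_def by (simp add: d)
  moreover have "sum ?f ({\<sigma>. \<sigma> permutes ?S} - {id}) = 0" using z by (intro sum.neutral) blast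
  moreover have "Omega_coeff m n x u = ?f id + sum ?f ({\<sigma>. \<sigma> permutes ?S} - {id})"
    unfolding Omega_coeff_def by (rule sum.remove[OF fin]) (simp add: permutes_id)
  ultimately show ?thesis by simp
qed



lemma coord_meas:
  assumes "l \<in> {1..w}"
  shows "(\<lambda>u. complex_of_real (u l)) \<in> borel_measurable (cube w)"
proof -
  have "(\<lambda>t::real. complex_of_real t) \<in> borel_measurable (lebesgue_on {0..1})"
    by (intro continuous_imp_measurable_on_sets_lebesgue continuous_intros) auto
  from measurable_compose[OF measurable_component_singleton[of l "{1..w}" "\<lambda>_. lebesgue_on {0..1}"] this]
  show ?thesis using assms unfolding cube_def by simp
qed

lemma Omega_expl_meas: "Omega_expl m n x \<in> borel_measurable (cube (Nw n m))"
proof -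
  have v: "(\<lambda>u. vcoord m n x u l) \<in> borel_measurable (cube (Nw n m))" if "l \<in> {1..Nw n m}" for l
    unfolding vcoord_eq using coord_meas[OF that] by measurable
  have P: "(\<lambda>u. Pprod m n x u j) \<in> borel_measurable (cube (Nw n m))" if "j \<ge> 1" for j
    unfolding Pprod_def using that by (intro borel_measurable_prod v) auto
  have c: "(\<lambda>u. cfac m n x u j) \<in> borel_measurable (cube (Nw n m))" if "j \<ge> 1" for j
    unfolding cfac_def
    by (cases "\<exists>k\<in>{0..<m}. j = Nw n k + 1")
      (simp_all only: if_True if_False, (intro borel_measurable_const P
       borel_measurable_divide borel_measurable_diff that)+)
  show ?thesis unfolding Omega_expl_def
    by (intro borel_measurable_prod borel_measurable_times borel_measurable_const c v) auto
qed

lemma prob_leb01: "prob_space (lebesgue_on {0..1::real})"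
  by (rule prob_spaceI) (simp add: emeasure_restrict_space)

lemma AE_pos: "AE u in cube w. \<forall>l\<in>{1..w}. 0 < u l"
proof -
  have "AE t in lebesgue_on {0..1::real}. t \<noteq> 0"
  proof -
    have "{0::real} \<in> null_sets (lebesgue_on {0..1})"
      by (auto simp: null_sets_restrict_space)
    then show ?thesis
      by (rule AE_I') (auto)
  qed
  then have "AE t in lebesgue_on {0..1::real}. 0 < t"
    using AE_space[of "lebesgue_on {0..1::real}"]
    by eventually_elim (auto simp: space_restrict_space)
  then have "AE u in cube w. 0 < u l" if "l \<in> {1..w}" for l
    unfolding cube_def using that by (intro AE_PiM_component prob_leb01) auto
  then show ?thesis
    by (intro eventually_ball_finite) auto
qed



lemma psf_leb: "product_sigma_finite (\<lambda>_. lebesgue_on {0..1::real})"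
  using prob_leb01 unfolding product_sigma_finite_def prob_space_def finite_measure_def by simp

lemma cube_int_prod:
  fixes h :: "nat \<Rightarrow> real \<Rightarrow> complex"
  assumes "\<And>l. l \<in> {1..w} \<Longrightarrow> integrable (lebesgue_on {0..1}) (h l)"
  shows "integrable (cube w) (\<lambda>u. \<Prod>l\<in>{1..w}. h l (u l))"
    and "(\<integral>u. (\<Prod>l\<in>{1..w}. h l (u l)) \<partial>cube w) = (\<Prod>l\<in>{1..w}. integral\<^sup>L (lebesgue_on {0..1}) (h l))"
proof -
  interpret product_sigma_finite "\<lambda>_. lebesgue_on {0..1::real}" by (rule psf_leb)
  show "integrable (cube w) (\<lambda>u. \<Prod>l\<in>{1..w}. h l (u l))"
    unfolding cube_def by (rule product_integrable_prod) (auto intro: assms)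
  show "(\<integral>u. (\<Prod>l\<in>{1..w}. h l (u l)) \<partial>cube w) = (\<Prod>l\<in>{1..w}. integral\<^sup>L (lebesgue_on {0..1}) (h l))"
    unfolding cube_def by (rule product_integral_prod) (auto intro: assms)
qed

lemma cube_int_prod_real:
  fixes h :: "nat \<Rightarrow> real \<Rightarrow> real"
  assumes "\<And>l. l \<in> {1..w} \<Longrightarrow> integrable (lebesgue_on {0..1}) (h l)"
  shows "(\<integral>u. (\<Prod>l\<in>{1..w}. h l (u l)) \<partial>cube w) = (\<Prod>l\<in>{1..w}. integral\<^sup>L (lebesgue_on {0..1}) (h l))"
proof -
  interpret product_sigma_finite "\<lambda>_. lebesgue_on {0..1::real}" by (rule psf_leb)
  show ?thesis
    unfolding cube_def by (rule product_integral_prod) (auto intro: assms)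
qed

lemma int_pow01: "integral\<^sup>L (lebesgue_on {0..1::real}) (\<lambda>t. t ^ p) = 1 / real (Suc p)"
proof -
  have int: "integrable (lebesgue_on {0..1::real}) (\<lambda>t. t ^ p)"
    by (intro continuous_imp_integrable_real continuous_intros)
  have h1: "((\<lambda>t. t ^ p) has_integral integral\<^sup>L (lebesgue_on {0..1::real}) (\<lambda>t. t ^ p)) {0..1}"
    by (rule has_integral_integral_lebesgue_on[OF int]) simp
  have h2: "((\<lambda>t::real. t ^ p) has_integral ((\<lambda>t. t ^ Suc p / real (Suc p)) 1 - (\<lambda>t. t ^ Suc p / real (Suc p)) 0)) {0..1}"
  proof (rule fundamental_theorem_of_calculus)
    fix t :: real assume "t \<in> {0..1}"
    have "((\<lambda>t. t ^ Suc p) has_real_derivative real (Suc p) * t ^ p) (at t within {0..1})"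
      using DERIV_pow[of "Suc p" t] by (simp add: has_field_derivative_at_within del: of_nat_Suc)
    from DERIV_cdivide[OF this, of "real (Suc p)"]
    have "((\<lambda>t. t ^ Suc p / real (Suc p)) has_real_derivative t ^ p) (at t within {0..1})"
      by (simp del: of_nat_Suc)
    then show "((\<lambda>t. t ^ Suc p / real (Suc p)) has_vector_derivative t ^ p) (at t within {0..1})"
      by (simp add: has_real_derivative_iff_has_vector_derivative)
  qed simp
  show ?thesis using has_integral_unique[OF h1 h2] by simp
qed

lemma int_mono01:
  fixes c :: complex
  shows "integrable (lebesgue_on {0..1}) (\<lambda>t. c * complex_of_real (t ^ p))"
    and "integral\<^sup>L (lebesgue_on {0..1}) (\<lambda>t. c * complex_of_real (t ^ p)) = c / of_nat (Suc p)"
proof -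
  have int: "integrable (lebesgue_on {0..1::real}) (\<lambda>t. t ^ p)"
    by (intro continuous_imp_integrable_real continuous_intros)
  then show "integrable (lebesgue_on {0..1}) (\<lambda>t. c * complex_of_real (t ^ p))"
    using integrable_mult_right[OF integrable_of_real[OF int], of c] by simp
  show "integral\<^sup>L (lebesgue_on {0..1}) (\<lambda>t. c * complex_of_real (t ^ p)) = c / of_nat (Suc p)"
  proof -
    have "integral\<^sup>L (lebesgue_on {0..1}) (\<lambda>t. c * complex_of_real (t ^ p)) =
       c * integral\<^sup>L (lebesgue_on {0..1}) (\<lambda>t. complex_of_real (t ^ p))"
      by (rule integral_mult_right_zero)
    also have "\<dots> = c * complex_of_real (1 / real (Suc p))"
      by (simp only: integral_complex_of_real int_pow01)
    finally show ?thesis by (simp add: divide_inverse del: of_nat_Suc)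
  qed
qed

lemma int_mono01_norm:
  fixes c :: complex
  shows "integral\<^sup>L (lebesgue_on {0..1}) (\<lambda>t. norm (c * complex_of_real (t ^ p))) = norm c / real (Suc p)"
proof -
  have "integral\<^sup>L (lebesgue_on {0..1}) (\<lambda>t. norm (c * complex_of_real (t ^ p))) =
        integral\<^sup>L (lebesgue_on {0..1}) (\<lambda>t. norm c * t ^ p)"
    by (rule Bochner_Integration.integral_cong) (auto simp: norm_mult norm_power space_restrict_space)
  also have "\<dots> = norm c / real (Suc p)"
    by (simp add: int_pow01 del: of_nat_Suc)
  finally show ?thesis .
qed



lemma interchange:
  fixes g :: "'i \<Rightarrow> 'a \<Rightarrow> complex" and f :: "'a \<Rightarrow> complex"
  assumes D: "countable D" "infinite D"
   and int: "\<And>i. i \<in> D \<Longrightarrow> integrable M (g i)"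
   and sumn: "(\<lambda>i. \<integral>x. norm (g i x) \<partial>M) summable_on D"
   and ae: "AE x in M. ((\<lambda>i. g i x) has_sum f x) D"
   and meas: "f \<in> borel_measurable M"
  shows "\<exists>I. has_bochner_integral M f I \<and> ((\<lambda>i. integral\<^sup>L M (g i)) has_sum I) D"
proof -
  define e where "e = from_nat_into D"
  have bij: "bij_betw e UNIV D" unfolding e_def using D by (rule bij_betw_from_nat_into)
  have eD: "e k \<in> D" for k using bij by (auto simp: bij_betw_def)
  define G where "G k = g (e k)" for k
  have intG: "integrable M (G k)" for k unfolding G_def using int eD by blast
  have s1: "(\<lambda>k. \<integral>x. norm (G k x) \<partial>M) summable_on UNIV"
    unfolding G_def using sumn summable_on_reindex_bij_betw[OF bij, of "\<lambda>i. \<integral>x. norm (g i x) \<partial>M"] by simp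
  have s2: "summable (\<lambda>k. \<integral>x. norm (G k x) \<partial>M)"
    using s1 by (subst (asm) summable_on_UNIV_nonneg_real_iff) auto
  have ae2: "AE x in M. summable (\<lambda>k. norm (G k x)) \<and> (\<lambda>k. G k x) sums f x"
    using ae
  proof eventually_elim
    case (elim x)
    then have hs: "((\<lambda>k. G k x) has_sum f x) UNIV"
      unfolding G_def using has_sum_reindex_bij_betw[OF bij, of "\<lambda>i. g i x"] by simp
    then have "(\<lambda>k. G k x) summable_on UNIV" by (auto simp: summable_on_def)
    then have "(\<lambda>k. norm (G k x)) summable_on UNIV"
      by (simp add: summable_on_iff_abs_summable_on_complex)
    then have "summable (\<lambda>k. norm (G k x))"
      by (subst (asm) summable_on_UNIV_nonneg_real_iff) auto
    moreover have "(\<lambda>k. G k x) sums f x" using hs by (rule has_sum_imp_sums)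
    ultimately show ?case by blast
  qed
  have ae1: "AE x in M. summable (\<lambda>k. norm (G k x))" using ae2 by eventually_elim blast
  note I = integrable_suminf[OF intG ae1 s2] sums_integral[OF intG ae1 s2]
  define J where "J = (\<integral>x. (\<Sum>k. G k x) \<partial>M)"
  have "has_bochner_integral M (\<lambda>x. \<Sum>k. G k x) J"
    unfolding J_def using I(1) by (simp add: has_bochner_integral_iff)
  moreover have "AE x in M. f x = (\<Sum>k. G k x)"
    using ae2 by eventually_elim (simp add: sums_iff)
  ultimately have H: "has_bochner_integral M f J"
    using has_bochner_integral_cong_AE[OF meas borel_measurable_integrable[OF I(1)]] by simp
  have ns: "summable (\<lambda>k. norm (integral\<^sup>L M (G k)))"
    by (rule summable_comparison_test[OF _ s2]) (auto intro!: exI[of _ 0] integral_norm_bound)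
  have "((\<lambda>k. integral\<^sup>L M (G k)) has_sum J) UNIV"
    unfolding J_def by (rule norm_summable_imp_has_sum[OF ns I(2)])
  then have "((\<lambda>i. integral\<^sup>L M (g i)) has_sum J) D"
    unfolding G_def using has_sum_reindex_bij_betw[OF bij, of "\<lambda>i. integral\<^sup>L M (g i)"] by simp
  with H show ?thesis by blast
qed



lemma Nw_0[simp]: "Nw n 0 = 0" by (simp add: Nw_def)
lemma Nw_Suc: "Nw n (Suc k) = Nw n k + n (Suc k)" by (simp add: Nw_def)

lemma Nw_mono: "i \<le> j \<Longrightarrow> Nw n i \<le> Nw n j"
  unfolding Nw_def by (intro sum_mono2) auto

lemma Nw_strict:
  assumes hn: "\<forall>i\<in>{1..m}. n i > 0" and "i < j" "j \<le> m"
  shows "Nw n i < Nw n j"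
proof -
  have "Nw n i \<le> Nw n (j - 1)" using assms by (intro Nw_mono) auto
  also have "Nw n (j-1) < Nw n j" using assms Nw_Suc[of n "j-1"] by (cases j) auto
  finally show ?thesis .
qed

lemma Nw_inj:
  assumes hn: "\<forall>i\<in>{1..m}. n i > 0" and "i \<le> m" "j \<le> m" "Nw n i = Nw n j"
  shows "i = j"
  using Nw_strict[OF hn, of i j] Nw_strict[OF hn, of j i] assms by (cases "i < j"; cases "j < i") auto

lemma acoef_end:
  assumes hn: "\<forall>i\<in>{1..m}. n i > 0" and "i \<in> {1..m}"
  shows "acoef m n x (Nw n i) = x i"
proof -
  have "(THE k. k \<in> {1..m} \<and> Nw n i = Nw n k) = i"
    using assms Nw_inj[OF hn] by (intro the_equality) auto
  then show ?thesis using assms unfolding acoef_def by auto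
qed

lemma acoef_block:
  assumes hn: "\<forall>i\<in>{1..m}. n i > 0" and i: "i \<in> {1..m}" and l: "l \<in> {Nw n (i-1)<..Nw n i}"
  shows "acoef m n x l = (if l = Nw n i then x i else 1)"
proof (cases "l = Nw n i")
  case True then show ?thesis using acoef_end[OF hn i] by simp
next
  case False
  have "\<not> (\<exists>k\<in>{1..m}. l = Nw n k)"
  proof
    assume "\<exists>k\<in>{1..m}. l = Nw n k"
    then obtain k where k: "k \<in> {1..m}" "l = Nw n k" by auto
    show False
    proof (cases "k < i")
      case True
      then have "Nw n k \<le> Nw n (i-1)" by (intro Nw_mono) auto
      then show False using k l by auto
    next
      case False
      then have "i < k" using k \<open>l \<noteq> Nw n i\<close> by (cases "i = k") auto
      then have "Nw n i < Nw n k" using k by (intro Nw_strict[OF hn]) auto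
      then show False using k l by auto
    qed
  qed
  then show ?thesis using False unfolding acoef_def by auto
qed

lemma prod_blocks:
  "(\<Prod>l\<in>{1..Nw n m}. F l) = (\<Prod>i\<in>{1..m}. \<Prod>l\<in>{Nw n (i-1)<..Nw n i}. F l)"
proof (induction m)
  case 0 then show ?case by simp
next
  case (Suc m)
  have "{1..Nw n (Suc m)} = {1..Nw n m} \<union> {Nw n m<..Nw n (Suc m)}"
    using Nw_mono[of m "Suc m" n] by auto
  then have "(\<Prod>l\<in>{1..Nw n (Suc m)}. F l) = (\<Prod>l\<in>{1..Nw n m}. F l) * (\<Prod>l\<in>{Nw n m<..Nw n (Suc m)}. F l)"
    by (simp add: prod.union_disjoint ivl_disj_int)
  then show ?case using Suc by simp
qed

definition Eexp :: "nat \<Rightarrow> (nat \<Rightarrow> nat) \<Rightarrow> (nat \<Rightarrow> nat) \<Rightarrow> nat \<Rightarrow> nat" where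
  "Eexp m n d l = (\<Sum>k=1..m. if Nw n (k-1) < l then d k else 0)"

lemma Eexp_block:
  assumes hn: "\<forall>i\<in>{1..m}. n i > 0" and i: "i \<in> {1..m}" and l: "l \<in> {Nw n (i-1)<..Nw n i}"
  shows "Eexp m n d l = (\<Sum>k=1..i. d k)"
proof -
  have c: "(Nw n (k-1) < l) = (k \<le> i)" if k: "k \<in> {1..m}" for k
  proof (cases "k \<le> i")
    case True
    then have "Nw n (k-1) \<le> Nw n (i-1)" by (intro Nw_mono) auto
    then show ?thesis using l True by auto
  next
    case False
    then have "Nw n i \<le> Nw n (k-1)" by (intro Nw_mono) auto
    then show ?thesis using l False by auto
  qed
  have "Eexp m n d l = (\<Sum>k=1..m. if k \<le> i then d k else 0)"
    unfolding Eexp_def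
  proof (intro sum.cong refl)
    fix k assume "k \<in> {1..m}"
    then show "(if Nw n (k-1) < l then d k else 0) = (if k \<le> i then d k else 0)" using c[of k] by simp
  qed
  also have "\<dots> = (\<Sum>k\<in>{k\<in>{1..m}. k \<le> i}. d k)"
    using sum.inter_filter[of "{1..m}" d "\<lambda>k. k \<le> i"] by simp
  also have "{k\<in>{1..m}. k \<le> i} = {1..i}" using i by auto
  finally show ?thesis .
qed

definition Dset :: "nat \<Rightarrow> (nat \<Rightarrow> nat) set" where
  "Dset m = PiE {1..m} (\<lambda>_. {1..})"

lemma Eexp_pos: "d \<in> Dset m \<Longrightarrow> m \<ge> 1 \<Longrightarrow> l \<ge> 1 \<Longrightarrow> Eexp m n d l \<ge> 1"
proof -
  assume d: "d \<in> Dset m" and m: "m \<ge> 1" and l: "l \<ge> 1"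
  have "1 \<le> d 1" using d m by (auto simp: Dset_def PiE_iff)
  also have "d 1 = (if Nw n (1-1) < l then d 1 else 0)" using l by simp
  also have "\<dots> \<le> Eexp m n d l" unfolding Eexp_def
    by (rule member_le_sum[of 1 "{1..m}" "\<lambda>k. if Nw n (k-1) < l then d k else 0"]) (use m in auto)
  finally show ?thesis .
qed

lemma prod_pow_swap:
  fixes \<alpha> :: "nat \<Rightarrow> 'a::comm_semiring_1"
  shows "(\<Prod>k=1..m. (\<Prod>l\<in>{Nw n (k-1)+1..Nw n m}. \<alpha> l) ^ d k) = (\<Prod>l=1..Nw n m. \<alpha> l ^ Eexp m n d l)"
proof -
  have r: "(\<Prod>l\<in>{Nw n (k-1)+1..Nw n m}. \<alpha> l) = (\<Prod>l\<in>{1..Nw n m}. if Nw n (k-1) < l then \<alpha> l else 1)" for k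
  proof -
    have "{l\<in>{1..Nw n m}. Nw n (k-1) < l} = {Nw n (k-1)+1..Nw n m}" by auto
    then show ?thesis by (simp add: prod.inter_filter[symmetric])
  qed
  have "(\<Prod>k=1..m. (\<Prod>l\<in>{Nw n (k-1)+1..Nw n m}. \<alpha> l) ^ d k)
     = (\<Prod>k=1..m. \<Prod>l=1..Nw n m. (if Nw n (k-1) < l then \<alpha> l ^ d k else 1))"
  proof (intro prod.cong refl)
    fix k
    show "(\<Prod>l\<in>{Nw n (k-1)+1..Nw n m}. \<alpha> l) ^ d k = (\<Prod>l=1..Nw n m. (if Nw n (k-1) < l then \<alpha> l ^ d k else 1))"
      unfolding r prod_power_distrib by (intro prod.cong refl) simp
  qed
  also have "\<dots> = (\<Prod>l=1..Nw n m. \<Prod>k=1..m. (if Nw n (k-1) < l then \<alpha> l ^ d k else 1))"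
    by (rule prod.swap)
  also have "\<dots> = (\<Prod>l=1..Nw n m. \<alpha> l ^ Eexp m n d l)"
    unfolding Eexp_def power_sum by (intro prod.cong refl) (simp add: if_distrib)
  finally show ?thesis .
qed



lemma geom_prod_has_sum:
  fixes q :: "nat \<Rightarrow> 'a::{real_normed_field, banach, second_countable_topology}"
  assumes q: "\<And>k. k \<in> {1..m} \<Longrightarrow> norm (q k) < 1"
  shows "((\<lambda>d. \<Prod>k\<in>{1..m}. q k ^ d k) has_sum (\<Prod>k\<in>{1..m}. q k / (1 - q k))) (Dset m)"
proof -
  have a1: "(\<lambda>j. norm (q k ^ j)) summable_on {1..}" if "k \<in> {1..m}" for k
  proof -
    have "norm (norm (q k)) < 1" using q[OF that] by simp
    from has_sum_geometric_from_1[OF this]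
    have "(\<lambda>j. norm (q k) ^ j) summable_on {1..}" by (auto simp: summable_on_def)
    then show ?thesis by (simp add: norm_power)
  qed
  have a2: "Infinite_Set_Sum.abs_summable_on (\<lambda>j. q k ^ j) {1..}" if "k \<in> {1..m}" for k
    using a1[OF that] abs_summable_equivalent[of "\<lambda>j. q k ^ j" "{1..}"] by simp
  have "Infinite_Set_Sum.abs_summable_on (\<lambda>d. \<Prod>k\<in>{1..m}. q k ^ d k) (PiE {1..m} (\<lambda>_. {1..}))"
    by (rule abs_summable_on_prod_PiE[where f = "\<lambda>k j. q k ^ j"]) (use a2 in auto)
  then have "(\<lambda>d. norm (\<Prod>k\<in>{1..m}. q k ^ d k)) summable_on (Dset m)"
    unfolding Dset_def using abs_summable_equivalent[of "\<lambda>d. \<Prod>k\<in>{1..m}. q k ^ d k" "PiE {1..m} (\<lambda>_. {1..})"] by simp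
  then have sm: "(\<lambda>d. \<Prod>k\<in>{1..m}. q k ^ d k) summable_on (Dset m)"
    by (rule abs_summable_summable)
  have "infsum (\<lambda>d. \<Prod>k\<in>{1..m}. q k ^ d k) (Dset m) = (\<Prod>k\<in>{1..m}. infsum (\<lambda>j. q k ^ j) {1..})"
    unfolding Dset_def by (rule infsum_prod_PiE_abs[where f = "\<lambda>k j. q k ^ j"]) (use a1 in auto)
  also have "\<dots> = (\<Prod>k\<in>{1..m}. q k / (1 - q k))"
    by (intro prod.cong refl infsumI has_sum_geometric_from_1 q) auto
  finally show ?thesis using has_sum_infsum[OF sm] by simp
qed

definition phi :: "nat \<Rightarrow> (nat \<Rightarrow> nat) \<Rightarrow> nat \<Rightarrow> nat" where
  "phi m d = (\<lambda>i. if i \<in> {1..m} then (\<Sum>k=1..i. d k) else 0)"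

definition psi :: "nat \<Rightarrow> (nat \<Rightarrow> nat) \<Rightarrow> nat \<Rightarrow> nat" where
  "psi m k = restrict (\<lambda>i. k i - k (i - 1)) {1..m}"

definition Tset :: "nat \<Rightarrow> (nat \<Rightarrow> nat) set" where
  "Tset m = {k :: nat \<Rightarrow> nat. (\<forall>i. i \<notin> {1..m} \<longrightarrow> k i = 0) \<and> (\<forall>i\<in>{1..m}. 0 < k i)
        \<and> (\<forall>i\<in>{1..<m}. k i < k (Suc i))}"

lemma Tset_mono: "k \<in> Tset m \<Longrightarrow> i \<le> j \<Longrightarrow> j \<le> m \<Longrightarrow> k i \<le> k j"
proof (induction j)
  case 0 then show ?case by simp
next
  case (Suc j)
  show ?case
  proof (cases "i = Suc j")
    case True then show ?thesis by simp
  next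
    case False
    then have "k i \<le> k j" using Suc by auto
    also have "k j \<le> k (Suc j)"
    proof (cases "j = 0")
      case True then show ?thesis using Suc.prems by (auto simp: Tset_def)
    next
      case False then show ?thesis using Suc.prems by (auto simp: Tset_def intro: less_imp_le)
    qed
    finally show ?thesis .
  qed
qed

lemma phi_in: "d \<in> Dset m \<Longrightarrow> phi m d \<in> Tset m"
proof -
  assume d: "d \<in> Dset m"
  have pos: "d i \<ge> 1" if "i \<in> {1..m}" for i using d that by (auto simp: Dset_def PiE_iff)
  have "0 < (\<Sum>k=1..i. d k)" if "i \<in> {1..m}" for i
    using pos[OF that] member_le_sum[of i "{1..i}" d] that by auto
  moreover have "(\<Sum>k=1..i. d k) < (\<Sum>k=1..Suc i. d k)" if "i \<in> {1..<m}" for i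
    using pos[of "Suc i"] that by simp
  ultimately show ?thesis unfolding Tset_def phi_def by auto
qed

lemma psi_in: "k \<in> Tset m \<Longrightarrow> psi m k \<in> Dset m"
proof -
  assume k: "k \<in> Tset m"
  have "k i - k (i-1) \<ge> 1" if "i \<in> {1..m}" for i
  proof (cases "i = 1")
    case True
    have "0 < k i" "k 0 = 0" using k that by (auto simp: Tset_def)
    then show ?thesis using True by simp
  next
    case False
    then have "i - 1 \<in> {1..<m}" using that by auto
    then have "k (i-1) < k (Suc (i-1))" using k unfolding Tset_def by blast
    then show ?thesis using False that by auto
  qed
  then show ?thesis unfolding psi_def Dset_def by auto
qed

lemma phi_psi: "k \<in> Tset m \<Longrightarrow> phi m (psi m k) = k"
proof
  fix i assume k: "k \<in> Tset m"
  have k0: "k 0 = 0" using k by (auto simp: Tset_def)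
  have tel: "(\<Sum>j=1..i. k j - k (j-1)) = k i" if "i \<le> m" for i
    using that
  proof (induction i)
    case 0 then show ?case using k0 by simp
  next
    case (Suc i)
    have "k i \<le> k (Suc i)" using Tset_mono[OF k, of i "Suc i"] Suc.prems by simp
    then show ?case using Suc by simp
  qed
  show "phi m (psi m k) i = k i"
  proof (cases "i \<in> {1..m}")
    case True
    have "(\<Sum>j=1..i. psi m k j) = (\<Sum>j=1..i. k j - k (j-1))"
      using True by (intro sum.cong refl) (auto simp: psi_def)
    then show ?thesis using True tel[of i] by (simp add: phi_def)
  next
    case False then show ?thesis using k by (auto simp: phi_def Tset_def)
  qed
qed

lemma psi_phi: "d \<in> Dset m \<Longrightarrow> psi m (phi m d) = d"
proof
  fix i assume d: "d \<in> Dset m"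
  show "psi m (phi m d) i = d i"
  proof (cases "i \<in> {1..m}")
    case True
    show ?thesis
    proof (cases "i = 1")
      case True then show ?thesis using \<open>i \<in> {1..m}\<close> by (simp add: psi_def phi_def)
    next
      case False
      then have "i - 1 \<in> {1..m}" "{1..i} = insert i {1..i-1}" "i \<notin> {1..i-1}" using True by auto
      then show ?thesis using True by (simp add: psi_def phi_def del: atLeastAtMost_iff)
    qed
  next
    case False then show ?thesis using d by (auto simp: psi_def Dset_def PiE_iff extensional_def)
  qed
qed



definition gfun :: "nat \<Rightarrow> (nat \<Rightarrow> nat) \<Rightarrow> (nat \<Rightarrow> complex) \<Rightarrow> (nat \<Rightarrow> nat) \<Rightarrow> (nat \<Rightarrow> real) \<Rightarrow> complex" where
  "gfun m n x d u = (\<Prod>l=1..Nw n m. acoef m n x l ^ Eexp m n d l * complex_of_real (u l ^ (Eexp m n d l - 1)))"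

lemma gint:
  assumes m: "m \<ge> 1" and d: "d \<in> Dset m"
  shows "integrable (cube (Nw n m)) (gfun m n x d)"
    and "integral\<^sup>L (cube (Nw n m)) (gfun m n x d) = (\<Prod>l=1..Nw n m. acoef m n x l ^ Eexp m n d l / of_nat (Eexp m n d l))"
proof -
  let ?h = "\<lambda>l t. acoef m n x l ^ Eexp m n d l * complex_of_real (t ^ (Eexp m n d l - 1))"
  have i: "integrable (lebesgue_on {0..1}) (?h l)" for l by (rule int_mono01(1))
  show "integrable (cube (Nw n m)) (gfun m n x d)"
    unfolding gfun_def by (rule cube_int_prod(1)[OF i])
  have "integral\<^sup>L (cube (Nw n m)) (gfun m n x d) = (\<Prod>l=1..Nw n m. integral\<^sup>L (lebesgue_on {0..1}) (?h l))"
    unfolding gfun_def by (rule cube_int_prod(2)[OF i])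
  also have "\<dots> = (\<Prod>l=1..Nw n m. acoef m n x l ^ Eexp m n d l / of_nat (Eexp m n d l))"
  proof (intro prod.cong refl)
    fix l assume "l \<in> {1..Nw n m}"
    then have "Eexp m n d l \<ge> 1" using Eexp_pos[OF d m] by auto
    then have "Suc (Eexp m n d l - 1) = Eexp m n d l" by simp
    then show "integral\<^sup>L (lebesgue_on {0..1}) (?h l) = acoef m n x l ^ Eexp m n d l / of_nat (Eexp m n d l)"
      by (simp only: int_mono01(2))
  qed
  finally show "integral\<^sup>L (cube (Nw n m)) (gfun m n x d) = (\<Prod>l=1..Nw n m. acoef m n x l ^ Eexp m n d l / of_nat (Eexp m n d l))" .
qed

lemma gint_norm:
  assumes m: "m \<ge> 1" and d: "d \<in> Dset m"
  shows "(\<integral>u. norm (gfun m n x d u) \<partial>cube (Nw n m)) = (\<Prod>l=1..Nw n m. norm (acoef m n x l) ^ Eexp m n d l / real (Eexp m n d l))"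
proof -
  let ?h = "\<lambda>l t. acoef m n x l ^ Eexp m n d l * complex_of_real (t ^ (Eexp m n d l - 1))"
  have i: "integrable (lebesgue_on {0..1}) (\<lambda>t. norm (?h l t))" for l by (rule integrable_norm[OF int_mono01(1)])
  have "(\<integral>u. norm (gfun m n x d u) \<partial>cube (Nw n m)) = (\<integral>u. (\<Prod>l=1..Nw n m. norm (?h l (u l))) \<partial>cube (Nw n m))"
    unfolding gfun_def by (simp only: prod_norm)
  also have "\<dots> = (\<Prod>l=1..Nw n m. integral\<^sup>L (lebesgue_on {0..1}) (\<lambda>t. norm (?h l t)))"
    by (rule cube_int_prod_real[OF i])
  also have "\<dots> = (\<Prod>l=1..Nw n m. norm (acoef m n x l) ^ Eexp m n d l / real (Eexp m n d l))"
  proof (intro prod.cong refl)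
    fix l assume "l \<in> {1..Nw n m}"
    then have "Eexp m n d l \<ge> 1" using Eexp_pos[OF d m] by auto
    then have "Suc (Eexp m n d l - 1) = Eexp m n d l" by simp
    then show "integral\<^sup>L (lebesgue_on {0..1}) (\<lambda>t. norm (?h l t)) = norm (acoef m n x l) ^ Eexp m n d l / real (Eexp m n d l)"
      by (simp only: int_mono01_norm norm_power)
  qed
  finally show ?thesis .
qed

definition Lterm :: "nat \<Rightarrow> (nat \<Rightarrow> nat) \<Rightarrow> (nat \<Rightarrow> complex) \<Rightarrow> (nat \<Rightarrow> nat) \<Rightarrow> complex" where
  "Lterm m n x k = (\<Prod>i=1..m. x i ^ k i / of_nat (k i) ^ n i)"

lemma term_eq:
  assumes hn: "\<forall>i\<in>{1..m}. n i > 0" and m: "m \<ge> 1" and d: "d \<in> Dset m"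
  shows "(\<Prod>l=1..Nw n m. acoef m n x l ^ Eexp m n d l / of_nat (Eexp m n d l)) = Lterm m n x (phi m d)"
proof -
  have "(\<Prod>l=1..Nw n m. acoef m n x l ^ Eexp m n d l / of_nat (Eexp m n d l))
     = (\<Prod>i=1..m. \<Prod>l\<in>{Nw n (i-1)<..Nw n i}. acoef m n x l ^ Eexp m n d l / of_nat (Eexp m n d l))"
    by (rule prod_blocks)
  also have "\<dots> = Lterm m n x (phi m d)" unfolding Lterm_def
  proof (intro prod.cong refl)
    fix i assume i: "i \<in> {1..m}"
    define K where "K = (\<Sum>k=1..i. d k)"
    have lt: "Nw n (i-1) < Nw n i" using i by (intro Nw_strict[OF hn]) auto
    have "(\<Prod>l\<in>{Nw n (i-1)<..Nw n i}. acoef m n x l ^ Eexp m n d l / of_nat (Eexp m n d l))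
        = (\<Prod>l\<in>{Nw n (i-1)<..Nw n i}. (if l = Nw n i then x i ^ K else 1) / of_nat K)"
      by (intro prod.cong refl) (simp add: acoef_block[OF hn i] Eexp_block[OF hn i] K_def)
    also have "\<dots> = (\<Prod>l\<in>{Nw n (i-1)<..Nw n i}. (if l = Nw n i then x i ^ K else 1)) / (\<Prod>l\<in>{Nw n (i-1)<..Nw n i}. of_nat K)"
      by (rule prod_dividef)
    also have "\<dots> = x i ^ K / of_nat K ^ n i"
    proof -
      have "card {Nw n (i-1)<..Nw n i} = n i"
        using i Nw_Suc[of n "i-1"] by (cases i) auto
      then show ?thesis using lt by (simp add: prod.delta)
    qed
    also have "\<dots> = x i ^ phi m d i / of_nat (phi m d i) ^ n i"
      using i by (simp add: phi_def K_def)
    finally show "(\<Prod>l\<in>{Nw n (i-1)<..Nw n i}. acoef m n x l ^ Eexp m n d l / of_nat (Eexp m n d l)) = x i ^ phi m d i / of_nat (phi m d i) ^ n i" .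
  qed
  finally show ?thesis .
qed

lemma acoef_cases:
  assumes hn: "\<forall>i\<in>{1..m}. n i > 0"
  shows "(\<exists>k\<in>{1..m}. l = Nw n k \<and> acoef m n x l = x k) \<or> acoef m n x l = 1"
proof (cases "\<exists>k\<in>{1..m}. l = Nw n k")
  case True
  then obtain k where "k \<in> {1..m}" "l = Nw n k" by auto
  then show ?thesis using acoef_end[OF hn] by auto
next
  case False then show ?thesis by (simp add: acoef_def)
qed

lemma acoef_norm_le:
  assumes hn: "\<forall>i\<in>{1..m}. n i > 0" and hx: "\<forall>i\<in>{1..m}. norm (x i) < 1"
  shows "norm (acoef m n x l) \<le> 1"
  using acoef_cases[OF hn, of l x] hx by (auto intro: less_imp_le)

lemma prod_le_member:
  fixes \<beta> :: "nat \<Rightarrow> real"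
  assumes "finite A" "\<forall>l\<in>A. 0 \<le> \<beta> l \<and> \<beta> l \<le> 1" "j \<in> A"
  shows "(\<Prod>l\<in>A. \<beta> l) \<le> \<beta> j"
proof -
  have "(\<Prod>l\<in>A. \<beta> l) = \<beta> j * (\<Prod>l\<in>A-{j}. \<beta> l)" using assms by (simp add: prod.remove)
  also have "\<dots> \<le> \<beta> j * 1"
    using assms by (intro mult_left_mono prod_le_1) auto
  finally show ?thesis by simp
qed

lemma q_lt:
  assumes hn: "\<forall>i\<in>{1..m}. n i > 0" and hx: "\<forall>i\<in>{1..m}. norm (x i) < 1" and k: "k \<in> {1..m}"
   and \<beta>: "\<forall>l. 0 \<le> \<beta> l \<and> \<beta> l \<le> 1"
  shows "(\<Prod>l\<in>{Nw n (k-1)+1..Nw n m}. norm (acoef m n x l) * \<beta> l) < 1"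
proof -
  have "Nw n (k-1) < Nw n k" using k by (intro Nw_strict[OF hn]) auto
  moreover have "Nw n k \<le> Nw n m" using k by (intro Nw_mono) auto
  ultimately have j: "Nw n k \<in> {Nw n (k-1)+1..Nw n m}" by auto
  have "(\<Prod>l\<in>{Nw n (k-1)+1..Nw n m}. norm (acoef m n x l) * \<beta> l) \<le> norm (acoef m n x (Nw n k)) * \<beta> (Nw n k)"
    using acoef_norm_le[OF hn hx] \<beta> j by (intro prod_le_member) (auto intro: mult_le_one)
  also have "\<dots> \<le> norm (x k)" using acoef_end[OF hn k] \<beta>
    by (simp add: mult_left_le)
  also have "\<dots> < 1" using hx k by auto
  finally show ?thesis .
qed

lemma sum_norms:
  assumes hn: "\<forall>i\<in>{1..m}. n i > 0" and hx: "\<forall>i\<in>{1..m}. norm (x i) < 1" and m: "m \<ge> 1"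
  shows "(\<lambda>d. \<integral>u. norm (gfun m n x d u) \<partial>cube (Nw n m)) summable_on Dset m"
proof -
  define q where "q k = (\<Prod>l\<in>{Nw n (k-1)+1..Nw n m}. norm (acoef m n x l))" for k
  have ql: "norm (q k) < 1" if "k \<in> {1..m}" for k
    using q_lt[OF hn hx that, of "\<lambda>_. 1"] by (simp add: q_def abs_prod)
  have s: "(\<lambda>d. \<Prod>k\<in>{1..m}. q k ^ d k) summable_on Dset m"
    using geom_prod_has_sum[of m q, OF ql] by (auto simp: summable_on_def)
  show ?thesis
  proof (rule summable_on_comparison_test[OF s])
    fix d assume d: "d \<in> Dset m"
    have "(\<integral>u. norm (gfun m n x d u) \<partial>cube (Nw n m)) = (\<Prod>l=1..Nw n m. norm (acoef m n x l) ^ Eexp m n d l / real (Eexp m n d l))"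
      by (rule gint_norm[OF m d])
    also have "\<dots> \<le> (\<Prod>l=1..Nw n m. norm (acoef m n x l) ^ Eexp m n d l)"
    proof (intro prod_mono conjI)
      fix l assume "l \<in> {1..Nw n m}"
      then have "Eexp m n d l \<ge> 1" using Eexp_pos[OF d m] by auto
      then show "norm (acoef m n x l) ^ Eexp m n d l / real (Eexp m n d l) \<le> norm (acoef m n x l) ^ Eexp m n d l"
        by (simp add: divide_le_eq mult_le_cancel_left1 del: of_nat_Suc)
    qed auto
    also have "\<dots> = (\<Prod>k\<in>{1..m}. q k ^ d k)"
      unfolding q_def by (rule prod_pow_swap[symmetric])
    finally show "(\<integral>u. norm (gfun m n x d u) \<partial>cube (Nw n m)) \<le> (\<Prod>k\<in>{1..m}. q k ^ d k)" .
    show "0 \<le> (\<integral>u. norm (gfun m n x d u) \<partial>cube (Nw n m))" by simp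
  qed
qed



lemma series:
  assumes hn: "\<forall>i\<in>{1..m}. n i > 0" and hx: "\<forall>i\<in>{1..m}. norm (x i) < 1" and m: "m \<ge> 1"
    and x0: "\<forall>i\<in>{1..m}. x i \<noteq> 0"
    and u: "\<forall>l\<in>{1..Nw n m}. 0 < u l \<and> u l \<le> 1"
  shows "((\<lambda>d. gfun m n x d u) has_sum Omega_expl m n x u) (Dset m)"
proof -
  let ?w = "Nw n m"
  let ?P = "Pprod m n x u"
  let ?st = "\<lambda>j. \<exists>k\<in>{0..<m}. j = Nw n k + 1"
  define s where "s k = Nw n (k-1) + 1" for k
  have a0: "acoef m n x l \<noteq> 0" for l using acoef_cases[OF hn, of l x] x0 by auto
  have v0: "vcoord m n x u l \<noteq> 0" if "l \<in> {1..?w}" for l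
  proof -
    have "0 < u l" using u that by blast
    then show ?thesis using a0[of l] by (simp add: vcoord_eq)
  qed
  have P0: "?P j \<noteq> 0" if "j \<ge> 1" for j
    unfolding Pprod_def using v0 that by (simp add: prod_zero_iff)
  have fac: "cfac m n x u j * (acoef m n x j * (\<Prod>l\<in>{Suc j..?w}. vcoord m n x u l))
      = (if ?st j then ?P j / (1 - ?P j) else 1) * (1 / complex_of_real (u j))" if j: "j \<in> {1..?w}" for j
  proof -
    have "{j..?w} = insert j {Suc j..?w}" using j by auto
    then have "?P j = vcoord m n x u j * (\<Prod>l\<in>{Suc j..?w}. vcoord m n x u l)"
      unfolding Pprod_def by simp
    then have e: "acoef m n x j * (\<Prod>l\<in>{Suc j..?w}. vcoord m n x u l) = ?P j / complex_of_real (u j)"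
    proof -
      have "0 < u j" using u j by blast
      then show ?thesis using \<open>?P j = _\<close> by (simp add: vcoord_eq field_simps)
    qed
    show ?thesis unfolding e cfac_def using P0[of j] j by auto
  qed
  have "Omega_expl m n x u = (\<Prod>j=1..?w. (if ?st j then ?P j / (1 - ?P j) else 1) * (1 / complex_of_real (u j)))"
    unfolding Omega_expl_def by (intro prod.cong refl) (rule fac)
  also have "\<dots> = (\<Prod>j=1..?w. (if ?st j then ?P j / (1 - ?P j) else 1)) * (\<Prod>j=1..?w. 1 / complex_of_real (u j))"
    by (rule prod.distrib)
  also have "(\<Prod>j=1..?w. (if ?st j then ?P j / (1 - ?P j) else 1)) = (\<Prod>j\<in>{j\<in>{1..?w}. ?st j}. ?P j / (1 - ?P j))"
    by (rule prod.inter_filter[symmetric]) simp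
  also have "{j\<in>{1..?w}. ?st j} = s ` {1..m}"
  proof (intro equalityI subsetI)
    fix j assume "j \<in> {j\<in>{1..?w}. ?st j}"
    then obtain k where k: "k \<in> {0..<m}" "j = Nw n k + 1" by auto
    have "j = s (Suc k)" using k by (simp add: s_def)
    moreover have "Suc k \<in> {1..m}" using k by simp
    ultimately show "j \<in> s ` {1..m}" by (rule image_eqI)
  next
    fix j assume "j \<in> s ` {1..m}"
    then obtain k where k: "k \<in> {1..m}" "j = s k" by auto
    have lt: "Nw n (k-1) < Nw n k" using k by (intro Nw_strict[OF hn]) auto
    have le: "Nw n k \<le> ?w" using k by (intro Nw_mono) auto
    have A: "1 \<le> s k" by (simp add: s_def)
    have B: "s k \<le> ?w" using lt le by (simp add: s_def)
    have C: "?st (s k)"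
    proof (rule bexI)
      show "s k = Nw n (k-1) + 1" by (simp add: s_def)
      show "k - 1 \<in> {0..<m}" using k by auto
    qed
    have "s k \<in> {1..?w}" "?st (s k)" using A B C by auto
    then show "j \<in> {j\<in>{1..?w}. ?st j}" using k(2) by blast
  qed
  also have "(\<Prod>j\<in>s ` {1..m}. ?P j / (1 - ?P j)) = (\<Prod>k\<in>{1..m}. ?P (s k) / (1 - ?P (s k)))"
  proof -
    have "inj_on s {1..m}"
    proof
      fix a b assume ab: "a \<in> {1..m}" "b \<in> {1..m}" "s a = s b"
      have "Nw n (a-1) = Nw n (b-1)" using ab(3) by (simp add: s_def)
      moreover have "a - 1 \<le> m" "b - 1 \<le> m" using ab by auto
      ultimately have "a - 1 = b - 1" using Nw_inj[OF hn] by blast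
      then show "a = b" using \<open>a \<in> {1..m}\<close> \<open>b \<in> {1..m}\<close> by auto
    qed
    from prod.reindex[OF this, of "\<lambda>j. ?P j / (1 - ?P j)"] show ?thesis by (simp only: comp_def)
  qed
  finally have Om: "Omega_expl m n x u = (\<Prod>k\<in>{1..m}. ?P (s k) / (1 - ?P (s k))) * (\<Prod>j=1..?w. 1 / complex_of_real (u j))" .
  have Pn: "norm (?P (s k)) = (\<Prod>l\<in>{Nw n (k-1)+1..?w}. norm (acoef m n x l) * \<bar>u l\<bar>)" for k
    unfolding Pprod_def s_def prod_norm[symmetric] by (simp add: vcoord_eq norm_mult)
  have ql: "norm (?P (s k)) < 1" if "k \<in> {1..m}" for k
  proof -
    let ?\<beta> = "\<lambda>l. if l \<in> {1..?w} then \<bar>u l\<bar> else 1"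
    have "norm (?P (s k)) = (\<Prod>l\<in>{Nw n (k-1)+1..?w}. norm (acoef m n x l) * ?\<beta> l)"
      unfolding Pn by (intro prod.cong refl) auto
    also have "\<dots> < 1" by (intro q_lt[OF hn hx that]) (use u in force)
    finally show ?thesis .
  qed
  have hs: "((\<lambda>d. (\<Prod>j=1..?w. 1 / complex_of_real (u j)) * (\<Prod>k\<in>{1..m}. ?P (s k) ^ d k)) has_sum
      ((\<Prod>j=1..?w. 1 / complex_of_real (u j)) * (\<Prod>k\<in>{1..m}. ?P (s k) / (1 - ?P (s k))))) (Dset m)"
    by (rule has_sum_cmult_right[OF geom_prod_has_sum]) (rule ql)
  have eq: "(\<Prod>j=1..?w. 1 / complex_of_real (u j)) * (\<Prod>k\<in>{1..m}. ?P (s k) ^ d k) = gfun m n x d u"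
    if d: "d \<in> Dset m" for d
  proof -
    have pw: "(\<Prod>k\<in>{1..m}. ?P (s k) ^ d k) = (\<Prod>l=1..?w. (acoef m n x l * complex_of_real (u l)) ^ Eexp m n d l)"
      unfolding Pprod_def s_def vcoord_eq by (rule prod_pow_swap)
    have "(\<Prod>j=1..?w. 1 / complex_of_real (u j)) * (\<Prod>k\<in>{1..m}. ?P (s k) ^ d k)
        = (\<Prod>l=1..?w. 1 / complex_of_real (u l) * (acoef m n x l * complex_of_real (u l)) ^ Eexp m n d l)"
      by (simp only: pw prod.distrib)
    also have "\<dots> = gfun m n x d u" unfolding gfun_def
    proof (intro prod.cong refl)
      fix l assume l: "l \<in> {1..?w}"
      then have E: "Eexp m n d l = Suc (Eexp m n d l - 1)" using Eexp_pos[OF d m, where l = l and n = n] by auto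
      have "0 < u l" using u l by blast then have "u l \<noteq> 0" by simp
      then show "1 / complex_of_real (u l) * (acoef m n x l * complex_of_real (u l)) ^ Eexp m n d l =
          acoef m n x l ^ Eexp m n d l * complex_of_real (u l ^ (Eexp m n d l - 1))"
        by (subst (1 2) E) (simp add: power_mult_distrib field_simps)
    qed
    finally show "(\<Prod>j=1..?w. 1 / complex_of_real (u j)) * (\<Prod>k\<in>{1..m}. ?P (s k) ^ d k) = gfun m n x d u" .
  qed
  have "((\<lambda>d. (\<Prod>j=1..?w. 1 / complex_of_real (u j)) * (\<Prod>k\<in>{1..m}. ?P (s k) ^ d k)) has_sum Omega_expl m n x u) (Dset m)"
    using hs by (simp only: Om mult.commute)
  then show ?thesis using has_sum_cong[of "Dset m" "\<lambda>d. (\<Prod>j=1..?w. 1 / complex_of_real (u j)) * (\<Prod>k\<in>{1..m}. ?P (s k) ^ d k)" "\<lambda>d. gfun m n x d u"] eq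
    by blast
qed



lemma Li_eq: "Li m n x = infsum (Lterm m n x) (Tset m)"
  unfolding Li_def Lterm_def Tset_def by simp

lemma Omega_zero:
  assumes hn: "\<forall>i\<in>{1..m}. n i > 0" and k: "k \<in> {1..m}" and xk: "x k = 0"
  shows "Omega_expl m n x u = 0"
proof -
  define j where "j = Nw n (k-1) + 1"
  have lt: "Nw n (k-1) < Nw n k" using k by (intro Nw_strict[OF hn]) auto
  have le: "Nw n k \<le> Nw n m" using k by (intro Nw_mono) auto
  have j: "j \<in> {1..Nw n m}" using lt le by (simp add: j_def)
  have z: "acoef m n x j * (\<Prod>l\<in>{Suc j..Nw n m}. vcoord m n x u l) = 0"
  proof (cases "j = Nw n k")
    case True then show ?thesis using acoef_end[OF hn k] xk by simp
  next
    case False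
    then have "Nw n k \<in> {Suc j..Nw n m}" using lt le by (auto simp: j_def)
    moreover have "vcoord m n x u (Nw n k) = 0" using acoef_end[OF hn k] xk by (simp add: vcoord_eq)
    ultimately have "(\<Prod>l\<in>{Suc j..Nw n m}. vcoord m n x u l) = 0" by (intro prod_zero) auto
    then show ?thesis by simp
  qed
  show ?thesis unfolding Omega_expl_def
    by (rule prod_zero) (use j z in auto)
qed

lemma Li_zero:
  assumes k: "k \<in> {1..m}" and xk: "x k = 0"
  shows "Li m n x = 0"
proof -
  have "Lterm m n x t = 0" if "t \<in> Tset m" for t
  proof -
    have "0 < t k" using that k by (auto simp: Tset_def)
    then have z: "x k ^ t k / of_nat (t k) ^ n k = 0" using xk by simp
    show ?thesis unfolding Lterm_def by (intro prod_zero bexI[of _ k]) (use z k in auto)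
  qed
  then show ?thesis unfolding Li_eq by (simp add: infsum_0)
qed

lemma Dset_countable: "countable (Dset m)"
  unfolding Dset_def by (intro countable_PiE) auto

lemma Dset_infinite:
  assumes m: "m \<ge> 1" shows "infinite (Dset m)"
proof
  assume f: "finite (Dset m)"
  have "{1::nat..} \<subseteq> (\<lambda>d. d 1) ` Dset m"
  proof
    fix j :: nat assume j: "j \<in> {1..}"
    have A: "restrict (\<lambda>_. j) {1..m} \<in> Dset m" using j by (auto simp: Dset_def)
    show "j \<in> (\<lambda>d. d 1) ` Dset m" by (rule rev_image_eqI[OF A]) (use m in simp)
  qed
  then have "finite {1::nat..}" using f by (rule finite_subset[OF _ finite_imageI])
  then show False by (simp add: infinite_Ici)
qed

theorem lemma9p2:
  fixes m :: nat and n :: "nat \<Rightarrow> nat" and x :: "nat \<Rightarrow> complex"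
  assumes "m \<ge> 1"
    and "\<forall>i\<in>{1..m}. n i > 0"
    and "\<forall>i\<in>{1..m}. norm (x i) < 1"
  shows "has_bochner_integral (cube (Nw n m)) (Omega_coeff m n x) (Li m n x)"
proof -
  note m = assms(1) and hn = assms(2) and hx = assms(3)
  have OC: "Omega_coeff m n x = Omega_expl m n x" by (rule ext) (rule Omega_coeff_expl)
  show ?thesis
  proof (cases "\<exists>k\<in>{1..m}. x k = 0")
    case True
    then obtain k where k: "k \<in> {1..m}" "x k = 0" by auto
    have "Omega_expl m n x = (\<lambda>_. 0)" by (rule ext) (rule Omega_zero[where x = x and k = k, OF hn k(1) k(2)])
    moreover have "Li m n x = 0" by (rule Li_zero[where x = x and k = k, OF k(1) k(2)])
    ultimately show ?thesis unfolding OC by (simp add: has_bochner_integral_zero)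
  next
    case False
    then have x0: "\<forall>i\<in>{1..m}. x i \<noteq> 0" by auto
    have ae: "AE u in cube (Nw n m). ((\<lambda>d. gfun m n x d u) has_sum Omega_expl m n x u) (Dset m)"
      using AE_pos[of "Nw n m"] AE_space[of "cube (Nw n m)"]
    proof eventually_elim
      case (elim u)
      have "\<forall>l\<in>{1..Nw n m}. 0 < u l \<and> u l \<le> 1"
        using elim by (auto simp: cube_def space_PiM PiE_iff space_restrict_space)
      then show ?case by (rule series[OF hn hx m x0])
    qed
    obtain I where I: "has_bochner_integral (cube (Nw n m)) (Omega_expl m n x) I"
      and hs: "((\<lambda>d. integral\<^sup>L (cube (Nw n m)) (gfun m n x d)) has_sum I) (Dset m)"
      using interchange[OF Dset_countable Dset_infinite[OF m] gint(1)[OF m] sum_norms[OF hn hx m] ae Omega_expl_meas]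
      by blast
    have "((\<lambda>d. Lterm m n x (phi m d)) has_sum I) (Dset m)"
      using hs has_sum_cong[of "Dset m" "\<lambda>d. integral\<^sup>L (cube (Nw n m)) (gfun m n x d)" "\<lambda>d. Lterm m n x (phi m d)"]
        gint(2)[OF m] term_eq[OF hn m] by simp
    moreover have "((\<lambda>d. Lterm m n x (phi m d)) has_sum I) (Dset m) \<longleftrightarrow> (Lterm m n x has_sum I) (Tset m)"
      by (rule has_sum_reindex_bij_witness[where i = "psi m" and j = "phi m"])
         (auto simp: psi_phi phi_in phi_psi psi_in)
    ultimately have "Li m n x = I" unfolding Li_eq by (simp add: infsumI)
    then show ?thesis using I unfolding OC by simp
  qed
qed

end
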